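(* Let $n\ge2$ and $Q\in SU_n$ with eigenvalues $\mu_1,\dots,\mu_n$ (with multiplicity) ordered so that $\arg(\mu_1)\le\cdots\le\arg(\mu_n)$, and assume $\zeta(Q):=\frac1{2\pi}\sum_{j=1}^n\arg(\mu_j)\ge0$. Let $m(Q):=\min\{\|X\|_\phi^2:X\in\mathfrak{su}_n,\ \exp(X)=Q\}$ and $\Theta(Q):=\{X\in\mathfrak{su}_n:\exp(X)=Q,\ \|X\|_\phi^2=m(Q)\}$. Let $X_0\in\mathfrak{su}_n$ with $\exp(X_0)=Q$ whose $n$ eigenvalues are $(\arg(\mu_1)+2h_1\pi)\mathbf{i},\dots,(\arg(\mu_n)+2h_n\pi)\mathbf{i}$, where $h_1,\dots,h_n\in\mathbb{Z}$ and $\sum_{j=1}^nh_j=-\zeta(Q)$. (a) If $\zeta(Q)=0$, then $m(Q)=\sum_{j=1}^n(\arg(\mu_j))^2$, and $X_0\in\Theta(Q)$ if and only if $h_j=0$ for all $j\in\{1,\dots,n\}$. (b) If $\zeta(Q)\ge1$, then $m(Q)=\sum_{j=1}^{n-\zeta(Q)}(\arg(\mu_j))^2+\sum_{j=n-\zeta(Q)+1}^n(2\pi-\arg(\mu_j))^2$. Moreover, if $\mu_{n-\zeta(Q)}\ne\mu_{n-\zeta(Q)+1}$, then $X_0\in\Theta(Q)$ if and only if $h_j=0$ for all $j\in\{1,\dots,n-\zeta(Q)\}$ and $h_l=-1$ for all $l\in\{n-\zeta(Q)+1,\dots,n\}$; while if $\mu_{n-\zeta(Q)}=\mu_{n-\zeta(Q)+1}$,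 then $X_0\in\Theta(Q)$ if and only if $h_r=0$ for every $r\in\{1,\dots,n-\zeta(Q)-1\}$ with $\mu_r\ne\mu_{n-\zeta(Q)}$, $h_t=-1$ for every $t\in\{n-\zeta(Q)+2,\dots,n\}$ with $\mu_t\ne\mu_{n-\zeta(Q)}$, and $h_m\in\{0,-1\}$ for every index $m$ with $\mu_m=\mu_{n-\zeta(Q)}$ (subject to the constraint $\sum_{j=1}^nh_j=-\zeta(Q)$).
   Context: $SU_n$ is the special unitary group, $\mathfrak{su}_n$ its Lie algebra of traceless skew-Hermitian matrices, $\exp$ the matrix exponential, $\|X\|_\phi=\sqrt{\mathrm{tr}(XX^* )}$ the Frobenius norm, and $\arg(z)\in(-\pi,\pi]$ the principal argument. Note $\zeta(Q)$ is an integer. *)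

theory Defs
  imports "HOL-Analysis.Analysis"
begin

text \<open>n x n complex matrices are modelled as complex^'n^'n with n = CARD('n).\<close>

definition cadj :: "complex^'n^'n \<Rightarrow> complex^'n^'n" where
  "cadj X = (\<chi> i j. cnj (X $ j $ i))"

definition mpow :: "complex^'n^'n \<Rightarrow> nat \<Rightarrow> complex^'n^'n" where
  "mpow X k = (((**) X) ^^ k) (mat 1)"

definition mexp :: "complex^'n^'n \<Rightarrow> complex^'n^'n" where
  "mexp X = (\<chi> i j. (\<Sum>k. (mpow X k) $ i $ j / of_nat (fact k)))"

definition SU :: "(complex^'n^'n) set" where
  "SU = {Q. Q ** cadj Q = mat 1 \<and> det Q = 1}"

definition su :: "(complex^'n^'n) set" where
  "su = {X. cadj X = - X \<and> trace X = 0}"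

definition frob_sq :: "complex^'n^'n \<Rightarrow> real" where
  "frob_sq X = Re (trace (X ** cadj X))"

text \<open>mu_1..mu_n are the eigenvalues of A with multiplicity (roots of char. polynomial).\<close>
definition eigvals_mult :: "complex^'n^'n \<Rightarrow> (nat \<Rightarrow> complex) \<Rightarrow> bool" where
  "eigvals_mult A mu \<longleftrightarrow>
     (\<forall>x. det (mat x - A) = (\<Prod>j=1..CARD('n). x - mu j))"

definition m_Q :: "complex^'n^'n \<Rightarrow> real" where
  "m_Q Q = Inf {frob_sq X | X. X \<in> su \<and> mexp X = Q}"

definition Theta :: "complex^'n^'n \<Rightarrow> (complex^'n^'n) set" where
  "Theta Q = {X. X \<in> su \<and> mexp X = Q \<and> frob_sq X = m_Q Q}"

definition zeta :: "nat \<Rightarrow> (nat \<Rightarrow> complex) \<Rightarrow> real" where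
  "zeta n mu = (\<Sum>j=1..n. Arg (mu j)) / (2 * pi)"

end

theory Submission
  imports Defs
begin



lemma pj_lo:
  fixes t lam :: real and h :: int
  assumes "-pi < t" "t \<le> pi" "0 \<le> lam" "lam < 8*pi^2" "lam \<le> 4*pi*(pi-t)"
  shows "(t + 2*pi*h)^2 + lam*h - t^2 \<ge> 0"
    "(t + 2*pi*h)^2 + lam*h - t^2 = 0 \<longleftrightarrow> h = 0 \<or> (h = -1 \<and> 4*pi*(pi-t) = lam)"
proof -
  have e: "(t + 2*pi*h)^2 + lam*h - t^2 = h * (4*pi*t + 4*pi^2*h + lam)"
    by (simp add: power2_eq_square algebra_simps)
  have pp: "pi > 0" by simp
  consider "h \<ge> 1" | "h = 0" | "h = -1" | "h \<le> -2" by linarith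
  then have "(h * (4*pi*t + 4*pi^2*h + lam) \<ge> 0) \<and>
     (h * (4*pi*t + 4*pi^2*h + lam) = 0 \<longleftrightarrow> h = 0 \<or> (h = -1 \<and> 4*pi*(pi-t) = lam))"
  proof cases
    case 1
    then have "real_of_int h \<ge> 1" by simp
    moreover have "4*pi^2*h \<ge> 4*pi^2*1" using \<open>real_of_int h \<ge> 1\<close> pp by (intro mult_left_mono) auto
    moreover have "4*pi*t + 4*pi^2 > 0"
    proof -
      have "4*pi*(t+pi) > 0" using assms pp by (intro mult_pos_pos) auto
      then show ?thesis by (simp add: power2_eq_square algebra_simps)
    qed
    ultimately have "4*pi*t + 4*pi^2*h + lam > 0" using assms by linarith
    with \<open>real_of_int h \<ge> 1\<close> show ?thesis using 1 by (auto simp: zero_less_mult_iff)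
  next
    case 2 then show ?thesis by simp
  next
    case 3
    have "4*pi*t + 4*pi^2*(-1) + lam = lam - 4*pi*(pi-t)" by (simp add: power2_eq_square algebra_simps)
    then show ?thesis using 3 assms by auto
  next
    case 4
    then have hh: "real_of_int h \<le> -2" by simp
    have "4*pi^2*h \<le> 4*pi^2*(-2)" using hh pp by (intro mult_left_mono) auto
    moreover have "4*pi*t + 4*pi^2*(-2) + lam < 0"
    proof -
      have "4*pi*t + 4*pi^2*(-2) + lam \<le> 4*pi*t - 8*pi^2 + 4*pi*(pi-t)" using assms by simp
      also have "\<dots> = -4*pi^2" by (simp add: power2_eq_square algebra_simps)
      also have "\<dots> < 0" using pp by simp
      finally show ?thesis .
    qed
    ultimately have "4*pi*t + 4*pi^2*h + lam < 0" by linarith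
    with hh have "h * (4*pi*t + 4*pi^2*h + lam) > 0" by (simp add: mult_neg_neg)
    then show ?thesis using 4 by auto
  qed
  then show "(t + 2*pi*h)^2 + lam*h - t^2 \<ge> 0"
    "(t + 2*pi*h)^2 + lam*h - t^2 = 0 \<longleftrightarrow> h = 0 \<or> (h = -1 \<and> 4*pi*(pi-t) = lam)"
    by (simp_all only: e)
qed

lemma pj_hi:
  fixes t lam :: real and h :: int
  assumes "-pi < t" "t \<le> pi" "0 \<le> lam" "lam < 8*pi^2" "4*pi*(pi-t) \<le> lam"
  shows "(t + 2*pi*h)^2 + lam*h - ((t - 2*pi)^2 - lam) \<ge> 0"
    "(t + 2*pi*h)^2 + lam*h - ((t - 2*pi)^2 - lam) = 0 \<longleftrightarrow> h = -1 \<or> (h = 0 \<and> 4*pi*(pi-t) = lam)"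
proof -
  define g where "g = h + 1"
  have e: "(t + 2*pi*h)^2 + lam*h - ((t - 2*pi)^2 - lam) = g * (4*pi*(t - 2*pi) + 4*pi^2*g + lam)"
    by (simp add: g_def power2_eq_square algebra_simps)
  have pp: "pi > 0" by simp
  consider "g \<ge> 2" | "g = 1" | "g = 0" | "g \<le> -1" by linarith
  then have "(g * (4*pi*(t - 2*pi) + 4*pi^2*g + lam) \<ge> 0) \<and>
     (g * (4*pi*(t - 2*pi) + 4*pi^2*g + lam) = 0 \<longleftrightarrow> h = -1 \<or> (h = 0 \<and> 4*pi*(pi-t) = lam))"
  proof cases
    case 1
    then have gg: "real_of_int g \<ge> 2" by simp
    have "4*pi^2*g \<ge> 4*pi^2*2" using gg pp by (intro mult_left_mono) auto
    moreover have "4*pi*(t - 2*pi) + 4*pi^2*2 + lam > 0"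
    proof -
      have "4*pi*(t - 2*pi) + 4*pi^2*2 + lam \<ge> 4*pi*(t - 2*pi) + 4*pi^2*2 + 4*pi*(pi-t)" using assms by simp
      moreover have "4*pi*(t - 2*pi) + 4*pi^2*2 + 4*pi*(pi-t) = 4*pi^2" by (simp add: power2_eq_square algebra_simps)
      moreover have "4*pi^2 > 0" using pp by simp
      ultimately show ?thesis by linarith
    qed
    ultimately have "4*pi*(t - 2*pi) + 4*pi^2*g + lam > 0" by linarith
    with gg have "g * (4*pi*(t - 2*pi) + 4*pi^2*g + lam) > 0" by simp
    then show ?thesis using 1 g_def by auto
  next
    case 2
    have "4*pi*(t - 2*pi) + 4*pi^2*1 + lam = lam - 4*pi*(pi-t)" by (simp add: power2_eq_square algebra_simps)
    then show ?thesis using 2 assms g_def by auto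
  next
    case 3 then show ?thesis using g_def by auto
  next
    case 4
    then have gg: "real_of_int g \<le> -1" by simp
    have "4*pi^2*g \<le> 4*pi^2*(-1)" using gg pp by (intro mult_left_mono) auto
    moreover have "4*pi*(t - 2*pi) + 4*pi^2*(-1) + lam < 0"
    proof -
      have "4*pi*t \<le> 4*pi*pi" using assms pp by simp
      then have "4*pi*(t - 2*pi) + 4*pi^2*(-1) + lam \<le> 4*pi*pi - 12*pi^2 + lam"
        by (simp add: power2_eq_square algebra_simps)
      also have "\<dots> < 0" using assms by (simp add: power2_eq_square)
      finally show ?thesis .
    qed
    ultimately have "4*pi*(t - 2*pi) + 4*pi^2*g + lam < 0" by linarith
    with gg have "g * (4*pi*(t - 2*pi) + 4*pi^2*g + lam) > 0" by (simp add: mult_neg_neg)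
    then show ?thesis using 4 g_def by auto
  qed
  then show "(t + 2*pi*h)^2 + lam*h - ((t - 2*pi)^2 - lam) \<ge> 0"
    "(t + 2*pi*h)^2 + lam*h - ((t - 2*pi)^2 - lam) = 0 \<longleftrightarrow> h = -1 \<or> (h = 0 \<and> 4*pi*(pi-t) = lam)"
    by (simp_all only: e)
qed


lemma comb_main:
  fixes t :: "nat \<Rightarrow> real" and h :: "nat \<Rightarrow> int" and n L :: nat and lam :: real
  assumes L: "L \<le> n" and rng: "\<forall>j\<in>{1..n}. -pi < t j \<and> t j \<le> pi"
    and lam: "0 \<le> lam" "lam < 8*pi^2"
    and lo: "\<forall>j\<in>{1..L}. lam \<le> 4*pi*(pi - t j)"
    and hi: "\<forall>j\<in>{L+1..n}. 4*pi*(pi - t j) \<le> lam"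
    and hs: "(\<Sum>j=1..n. h j) = - int (n - L)"
  shows "(\<Sum>j=1..n. (t j + 2*pi*h j)^2) \<ge> (\<Sum>j=1..L. (t j)^2) + (\<Sum>j=L+1..n. (t j - 2*pi)^2)"
    "(\<Sum>j=1..n. (t j + 2*pi*h j)^2) = (\<Sum>j=1..L. (t j)^2) + (\<Sum>j=L+1..n. (t j - 2*pi)^2)
      \<longleftrightarrow> (\<forall>j\<in>{1..n}. (h j = 0 \<and> lam \<le> 4*pi*(pi - t j)) \<or> (h j = -1 \<and> 4*pi*(pi - t j) \<le> lam))"
proof -
  define G where "G j = (if j \<le> L then (t j)^2 else (t j - 2*pi)^2 - lam)" for j
  define T where "T j = (t j + 2*pi*h j)^2 + lam * h j - G j" for j
  have split: "{1..n} = {1..L} \<union> {L+1..n}" "{1..L} \<inter> {L+1..n} = {}" using L by auto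
  have sG: "(\<Sum>j=1..n. G j) = (\<Sum>j=1..L. (t j)^2) + (\<Sum>j=L+1..n. (t j - 2*pi)^2) - lam * (n - L)"
  proof -
    have "(\<Sum>j=1..n. G j) = (\<Sum>j=1..L. G j) + (\<Sum>j=L+1..n. G j)"
      by (subst split(1), rule sum.union_disjoint) (use split in auto)
    also have "(\<Sum>j=1..L. G j) = (\<Sum>j=1..L. (t j)^2)" by (rule sum.cong) (auto simp: G_def)
    also have "(\<Sum>j=L+1..n. G j) = (\<Sum>j=L+1..n. (t j - 2*pi)^2 - lam)" by (rule sum.cong) (auto simp: G_def)
    also have "\<dots> = (\<Sum>j=L+1..n. (t j - 2*pi)^2) - lam * (n - L)"
      by (simp add: sum_subtractf)
    finally show ?thesis using L by (simp add: of_nat_diff)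
  qed
  have sh: "(\<Sum>j=1..n. lam * h j) = - lam * (n - L)"
  proof -
    have "(\<Sum>j=1..n. lam * h j) = lam * real_of_int (\<Sum>j=1..n. h j)" by (simp add: sum_distrib_left)
    also have "real_of_int (\<Sum>j=1..n. h j) = - real (n - L)" using hs by simp
    finally show ?thesis by simp
  qed
  have key: "(\<Sum>j=1..n. (t j + 2*pi*h j)^2) = (\<Sum>j=1..n. T j) + ((\<Sum>j=1..L. (t j)^2) + (\<Sum>j=L+1..n. (t j - 2*pi)^2))"
  proof -
    have "(\<Sum>j=1..n. T j) = (\<Sum>j=1..n. (t j + 2*pi*h j)^2) + (\<Sum>j=1..n. lam * h j) - (\<Sum>j=1..n. G j)"
      by (simp add: T_def sum.distrib sum_subtractf)
    then show ?thesis using sG sh by simp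
  qed
  have Tnn: "T j \<ge> 0" and Tz: "T j = 0 \<longleftrightarrow> ((h j = 0 \<and> lam \<le> 4*pi*(pi - t j)) \<or> (h j = -1 \<and> 4*pi*(pi - t j) \<le> lam))"
    if j: "j \<in> {1..n}" for j
  proof -
    have r: "-pi < t j" "t j \<le> pi" using rng j by auto
    show "T j \<ge> 0"
    proof (cases "j \<le> L")
      case True
      then show ?thesis using pj_lo(1)[OF r lam, of "h j"] lo j by (auto simp: T_def G_def)
    next
      case False
      then show ?thesis using pj_hi(1)[OF r lam, of "h j"] hi j by (auto simp: T_def G_def)
    qed
    show "T j = 0 \<longleftrightarrow> ((h j = 0 \<and> lam \<le> 4*pi*(pi - t j)) \<or> (h j = -1 \<and> 4*pi*(pi - t j) \<le> lam))"
    proof (cases "j \<le> L")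
      case True
      then have "lam \<le> 4*pi*(pi - t j)" using lo j by auto
      then show ?thesis using pj_lo(2)[OF r lam, of "h j"] True by (auto simp: T_def G_def)
    next
      case False
      then have "4*pi*(pi - t j) \<le> lam" using hi j by auto
      then show ?thesis using pj_hi(2)[OF r lam, of "h j"] False by (auto simp: T_def G_def)
    qed
  qed
  have "(\<Sum>j=1..n. T j) \<ge> 0" by (rule sum_nonneg) (use Tnn in auto)
  then show "(\<Sum>j=1..n. (t j + 2*pi*h j)^2) \<ge> (\<Sum>j=1..L. (t j)^2) + (\<Sum>j=L+1..n. (t j - 2*pi)^2)"
    using key by simp
  have "(\<Sum>j=1..n. T j) = 0 \<longleftrightarrow> (\<forall>j\<in>{1..n}. T j = 0)"
    by (rule sum_nonneg_eq_0_iff) (use Tnn in auto)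
  then show "(\<Sum>j=1..n. (t j + 2*pi*h j)^2) = (\<Sum>j=1..L. (t j)^2) + (\<Sum>j=L+1..n. (t j - 2*pi)^2)
      \<longleftrightarrow> (\<forall>j\<in>{1..n}. (h j = 0 \<and> lam \<le> 4*pi*(pi - t j)) \<or> (h j = -1 \<and> 4*pi*(pi - t j) \<le> lam))"
    using key Tz by auto
qed


lemma dcmp: "4*pi*(pi - a) \<le> 4*pi*(pi - b) \<longleftrightarrow> b \<le> a"
  by (simp add: mult_le_cancel_left_pos)

lemma sum_split_L:
  fixes f :: "nat \<Rightarrow> 'a::comm_monoid_add"
  assumes "L \<le> n"
  shows "(\<Sum>j=1..n. f j) = (\<Sum>j=1..L. f j) + (\<Sum>j=L+1..n. f j)"
proof -
  have "{1..n} = {1..L} \<union> {L+1..n}" "{1..L} \<inter> {L+1..n} = {}" using assms by auto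
  then show ?thesis by (simp add: sum.union_disjoint)
qed

lemma nonpos_sum_zero:
  fixes h :: "nat \<Rightarrow> int"
  assumes "finite A" "\<forall>j\<in>A. h j \<le> 0" "(\<Sum>j\<in>A. h j) = 0"
  shows "\<forall>j\<in>A. h j = 0"
proof -
  have "(\<Sum>j\<in>A. - h j) = 0" using assms(3) by (simp add: sum_negf)
  then have "\<forall>j\<in>A. - h j = 0" using sum_nonneg_eq_0_iff[OF assms(1), of "\<lambda>j. - h j"] assms(2) by auto
  then show ?thesis by auto
qed

lemma cond_unequal:
  fixes t :: "nat \<Rightarrow> real" and h :: "nat \<Rightarrow> int"
  assumes L: "1 \<le> L" "L < n"
    and sorted: "\<forall>i j. 1 \<le> i \<and> i \<le> j \<and> j \<le> n \<longrightarrow> t i \<le> t j"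
    and neq: "t L < t (L+1)"
    and hs: "(\<Sum>j=1..n. h j) = - int (n - L)"
  shows "(\<forall>j\<in>{1..n}. (h j = 0 \<and> 4*pi*(pi - t L) \<le> 4*pi*(pi - t j)) \<or> (h j = -1 \<and> 4*pi*(pi - t j) \<le> 4*pi*(pi - t L)))
     \<longleftrightarrow> (\<forall>j\<in>{1..L}. h j = 0) \<and> (\<forall>l\<in>{L+1..n}. h l = -1)"
proof
  assume c: "\<forall>j\<in>{1..n}. (h j = 0 \<and> 4*pi*(pi - t L) \<le> 4*pi*(pi - t j)) \<or> (h j = -1 \<and> 4*pi*(pi - t j) \<le> 4*pi*(pi - t L))"
  have hi: "\<forall>l\<in>{L+1..n}. h l = -1"
  proof
    fix l assume l: "l \<in> {L+1..n}"
    have "t (L+1) \<le> t l" using sorted l L by auto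
    then have "\<not> t l \<le> t L" using neq by linarith
    then show "h l = -1" using c l L by (auto simp: dcmp)
  qed
  have le0: "\<forall>j\<in>{1..L}. h j \<le> 0"
  proof
    fix j assume "j \<in> {1..L}"
    then have "j \<in> {1..n}" using L by auto
    then have "h j = 0 \<or> h j = -1" using c by blast
    then show "h j \<le> 0" by auto
  qed
  have "(\<Sum>j=1..n. h j) = (\<Sum>j=1..L. h j) + (\<Sum>j=L+1..n. h j)" using L by (intro sum_split_L) simp
  also have "(\<Sum>j=L+1..n. h j) = (\<Sum>j=L+1..n. -1)" using hi by (intro sum.cong) auto
  also have "\<dots> = - int (n - L)" using L by simp
  finally have "(\<Sum>j=1..L. h j) = 0" using hs by simp
  then have "\<forall>j\<in>{1..L}. h j = 0" using nonpos_sum_zero[OF _ le0] by simp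
  with hi show "(\<forall>j\<in>{1..L}. h j = 0) \<and> (\<forall>l\<in>{L+1..n}. h l = -1)" by simp
next
  assume c: "(\<forall>j\<in>{1..L}. h j = 0) \<and> (\<forall>l\<in>{L+1..n}. h l = -1)"
  show "\<forall>j\<in>{1..n}. (h j = 0 \<and> 4*pi*(pi - t L) \<le> 4*pi*(pi - t j)) \<or> (h j = -1 \<and> 4*pi*(pi - t j) \<le> 4*pi*(pi - t L))"
  proof
    fix j assume j: "j \<in> {1..n}"
    show "(h j = 0 \<and> 4*pi*(pi - t L) \<le> 4*pi*(pi - t j)) \<or> (h j = -1 \<and> 4*pi*(pi - t j) \<le> 4*pi*(pi - t L))"
    proof (cases "j \<le> L")
      case True
      then have "t j \<le> t L" using sorted[rule_format, of j L] j L by auto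
      then show ?thesis using c True j by (auto simp: dcmp)
    next
      case False
      then have "t L \<le> t j" using sorted j L by auto
      then show ?thesis using c False j by (auto simp: dcmp)
    qed
  qed
qed

lemma cond_equal:
  fixes t :: "nat \<Rightarrow> real" and h :: "nat \<Rightarrow> int" and mu :: "nat \<Rightarrow> 'c"
  assumes L: "1 \<le> L" "L < n"
    and sorted: "\<forall>i j. 1 \<le> i \<and> i \<le> j \<and> j \<le> n \<longrightarrow> t i \<le> t j"
    and mueq: "\<forall>j\<in>{1..n}. mu j = mu L \<longleftrightarrow> t j = t L"
    and eq: "mu L = mu (L+1)"
  shows "(\<forall>j\<in>{1..n}. (h j = 0 \<and> 4*pi*(pi - t L) \<le> 4*pi*(pi - t j)) \<or> (h j = -1 \<and> 4*pi*(pi - t j) \<le> 4*pi*(pi - t L)))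
     \<longleftrightarrow> (\<forall>r\<in>{1..L-1}. mu r \<noteq> mu L \<longrightarrow> h r = 0) \<and> (\<forall>s\<in>{L+2..n}. mu s \<noteq> mu L \<longrightarrow> h s = -1)
         \<and> (\<forall>m\<in>{1..n}. mu m = mu L \<longrightarrow> h m \<in> {0, -1})"
proof
  assume c: "\<forall>j\<in>{1..n}. (h j = 0 \<and> 4*pi*(pi - t L) \<le> 4*pi*(pi - t j)) \<or> (h j = -1 \<and> 4*pi*(pi - t j) \<le> 4*pi*(pi - t L))"
  have A: "\<forall>r\<in>{1..L-1}. mu r \<noteq> mu L \<longrightarrow> h r = 0"
  proof (intro ballI impI)
    fix r assume r: "r \<in> {1..L-1}" and ne: "mu r \<noteq> mu L"
    have rn: "r \<in> {1..n}" using r L by auto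
    have "t r \<le> t L" using sorted r L by auto
    moreover have "t r \<noteq> t L" using mueq rn ne by auto
    ultimately have "\<not> t L \<le> t r" by linarith
    then show "h r = 0" using c rn by (auto simp: dcmp)
  qed
  have B: "\<forall>s\<in>{L+2..n}. mu s \<noteq> mu L \<longrightarrow> h s = -1"
  proof (intro ballI impI)
    fix s assume s: "s \<in> {L+2..n}" and ne: "mu s \<noteq> mu L"
    have sn: "s \<in> {1..n}" using s L by auto
    have "t L \<le> t s" using sorted s L by auto
    moreover have "t s \<noteq> t L" using mueq sn ne by auto
    ultimately have "\<not> t s \<le> t L" by linarith
    then show "h s = -1" using c sn by (auto simp: dcmp)
  qed
  have C: "\<forall>m\<in>{1..n}. mu m = mu L \<longrightarrow> h m \<in> {0, -1}" using c by auto
  show "(\<forall>r\<in>{1..L-1}. mu r \<noteq> mu L \<longrightarrow> h r = 0) \<and> (\<forall>s\<in>{L+2..n}. mu s \<noteq> mu L \<longrightarrow> h s = -1)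
         \<and> (\<forall>m\<in>{1..n}. mu m = mu L \<longrightarrow> h m \<in> {0, -1})" using A B C by blast
next
  assume c: "(\<forall>r\<in>{1..L-1}. mu r \<noteq> mu L \<longrightarrow> h r = 0) \<and> (\<forall>s\<in>{L+2..n}. mu s \<noteq> mu L \<longrightarrow> h s = -1)
         \<and> (\<forall>m\<in>{1..n}. mu m = mu L \<longrightarrow> h m \<in> {0, -1})"
  show "\<forall>j\<in>{1..n}. (h j = 0 \<and> 4*pi*(pi - t L) \<le> 4*pi*(pi - t j)) \<or> (h j = -1 \<and> 4*pi*(pi - t j) \<le> 4*pi*(pi - t L))"
  proof
    fix j assume j: "j \<in> {1..n}"
    show "(h j = 0 \<and> 4*pi*(pi - t L) \<le> 4*pi*(pi - t j)) \<or> (h j = -1 \<and> 4*pi*(pi - t j) \<le> 4*pi*(pi - t L))"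
    proof (cases "mu j = mu L")
      case True
      then have "t j = t L" using mueq j by auto
      moreover have "h j \<in> {0, -1}" using c j True by auto
      ultimately show ?thesis by auto
    next
      case False
      have jL: "j \<noteq> L" using False by auto
      have jL1: "j \<noteq> L + 1" using False eq by auto
      show ?thesis
      proof (cases "j < L")
        case True
        then have "j \<in> {1..L-1}" using j by auto
        then have "h j = 0" using c False by auto
        moreover have "t j \<le> t L" using sorted j True L by auto
        ultimately show ?thesis by (auto simp: dcmp)
      next
        case False2: False
        then have "j \<in> {L+2..n}" using j jL jL1 by auto
        then have "h j = -1" using c False by auto
        moreover have "t L \<le> t j" using sorted j False2 L by auto
        ultimately show ?thesis by (auto simp: dcmp)
      qed
    qed
  qed
qed




definition cinner :: "complex^'n \<Rightarrow> complex^'n \<Rightarrow> complex" where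
  "cinner v w = (\<Sum>i\<in>UNIV. cnj (v$i) * w$i)"

lemma cinner_add_right: "cinner v (w + u) = cinner v w + cinner v u"
  by (simp add: cinner_def distrib_left sum.distrib)
lemma cinner_add_left: "cinner (v + w) u = cinner v u + cinner w u"
  by (simp add: cinner_def distrib_right sum.distrib)
lemma cinner_diff_right: "cinner v (w - u) = cinner v w - cinner v u"
  by (simp add: cinner_def right_diff_distrib sum_subtractf)
lemma cinner_diff_left: "cinner (v - w) u = cinner v u - cinner w u"
  by (simp add: cinner_def left_diff_distrib sum_subtractf)
lemma cinner_scal_right: "cinner v (c *s w) = c * cinner v w"
  by (simp add: cinner_def sum_distrib_left mult.left_commute)
lemma cinner_scal_left: "cinner (c *s v) w = cnj c * cinner v w"
  by (simp add: cinner_def sum_distrib_left mult.assoc)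
lemma cinner_scaleR_right: "cinner v (r *\<^sub>R w) = of_real r * cinner v w"
  unfolding cinner_def vector_scaleR_component by (simp add: sum_distrib_left scaleR_conv_of_real mult_ac)
lemma cinner_scaleR_left: "cinner (r *\<^sub>R v) w = of_real r * cinner v w"
  unfolding cinner_def vector_scaleR_component by (simp add: sum_distrib_left scaleR_conv_of_real mult_ac)
lemma cinner_cnj: "cnj (cinner v w) = cinner w v"
  by (simp add: cinner_def mult.commute)
lemma cinner_zero_right[simp]: "cinner v 0 = 0" by (simp add: cinner_def)
lemma cinner_zero_left[simp]: "cinner 0 v = 0" by (simp add: cinner_def)

lemma inner_cinner: "inner v w = Re (cinner v w)"
  by (simp add: cinner_def inner_vec_def inner_complex_def Re_sum)

lemma norm_cinner: "(norm v)^2 = Re (cinner v v)"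
  by (simp add: power2_norm_eq_inner inner_cinner)

lemma Im_cinner_self: "Im (cinner v v) = 0"
  by (simp add: cinner_def Im_sum)

lemma cinner_self_real: "cinner v v = of_real ((norm v)^2)"
  by (simp add: complex_eq_iff norm_cinner Im_cinner_self)

lemma cinner_adj: "cinner (A *v v) w = cinner v (cadj A *v w)"
proof -
  have "cinner (A *v v) w = (\<Sum>i\<in>UNIV. \<Sum>j\<in>UNIV. cnj (A$i$j) * cnj (v$j) * w$i)"
    by (simp add: cinner_def matrix_vector_mult_def cnj_sum sum_distrib_right)
  also have "\<dots> = (\<Sum>j\<in>UNIV. \<Sum>i\<in>UNIV. cnj (A$i$j) * cnj (v$j) * w$i)"
    by (rule sum.swap)
  also have "\<dots> = cinner v (cadj A *v w)"
    by (simp add: cinner_def cadj_def matrix_vector_mult_def sum_distrib_left mult_ac)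
  finally show ?thesis .
qed

lemma mvec_scal: "(A::complex^'n^'m) *v (c *s v) = c *s (A *v v)"
  unfolding matrix_vector_mult_def vec_eq_iff
  by (simp add: sum_distrib_left, intro allI sum.cong refl, simp add: mult.left_commute)


lemma mvec_scaleR: "(A::complex^'n^'m) *v (r *\<^sub>R v) = r *\<^sub>R (A *v v)"
proof -
  have "r *\<^sub>R v = of_real r *s v" unfolding vec_eq_iff vector_scaleR_component vector_smult_component
    by (simp add: scaleR_conv_of_real)
  moreover have "r *\<^sub>R (A *v v) = of_real r *s (A *v v)" unfolding vec_eq_iff vector_scaleR_component vector_smult_component
    by (simp add: scaleR_conv_of_real)
  ultimately show ?thesis by (simp add: mvec_scal)
qed

lemma cinner_herm: "cadj H = H \<Longrightarrow> cinner (H *v v) w = cinner v (H *v w)"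
  by (simp add: cinner_adj)

lemma cinner_continuous: "continuous_on UNIV (\<lambda>v::complex^'n. cinner b v)"
  unfolding cinner_def by (intro continuous_intros)

lemma eig_step:
  fixes H :: "complex^'n^'n" and B :: "(complex^'n) set"
  assumes herm: "cadj H = H" and finB: "finite B"
    and eigB: "\<forall>b\<in>B. \<exists>c::real. H *v b = of_real c *s b"
    and card: "card B < CARD('n)"
  shows "\<exists>v c. cinner v v = 1 \<and> (\<forall>b\<in>B. cinner b v = 0) \<and> H *v v = of_real c *s v"
proof -
  define T where "T = B \<union> (\<lambda>b. \<i> *s b) ` B"
  have "card T \<le> 2 * card B" unfolding T_def
    using card_Un_le[of B "(\<lambda>b. \<i> *s b) ` B"] card_image_le[OF finB, of "\<lambda>b. \<i> *s b"] by linarith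
  moreover have "finite T" using finB T_def by auto
  ultimately have "dim T < DIM(complex^'n)" using card dim_le_card'[of T] by simp
  then obtain x :: "complex^'n" where x0: "x \<noteq> 0" and xo: "\<And>y. y \<in> span T \<Longrightarrow> orthogonal x y"
    using orthogonal_to_subspace_exists by blast
  define S where "S = {v::complex^'n. \<forall>b\<in>B. cinner b v = 0}"
  have xS: "x \<in> S"
  proof -
    { fix b assume b: "b \<in> B"
      have "inner x b = 0" using xo[of b] b span_base[of b T] by (auto simp: T_def orthogonal_def)
      then have r: "Re (cinner x b) = 0" by (simp add: inner_cinner)
      have "inner x (\<i> *s b) = 0" using xo[of "\<i> *s b"] b span_base[of "\<i> *s b" T] by (auto simp: T_def orthogonal_def)
      then have "Re (\<i> * cinner x b) = 0" by (simp add: inner_cinner cinner_scal_right)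
      then have "Im (cinner x b) = 0" by simp
      with r have "cinner x b = 0" by (simp add: complex_eq_iff)
      then have "cinner b x = 0" using cinner_cnj[of x b] by simp }
    then show ?thesis by (simp add: S_def)
  qed
  have S_add: "v + w \<in> S" if "v \<in> S" "w \<in> S" for v w using that by (simp add: S_def cinner_add_right)
  have S_scal: "c *s v \<in> S" if "v \<in> S" for v c using that by (simp add: S_def cinner_scal_right)
  have S_scaleR: "r *\<^sub>R v \<in> S" if "v \<in> S" for v r using that by (simp add: S_def cinner_scaleR_right)
  have S_H: "H *v v \<in> S" if "v \<in> S" for v
  proof -
    { fix b assume b: "b \<in> B"
      obtain cb :: real where cb: "H *v b = of_real cb *s b" using eigB b by auto
      have "cinner b (H *v v) = cinner (H *v b) v" using cinner_herm[OF herm] by simp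
      also have "\<dots> = 0" using that b by (simp add: cb cinner_scal_left S_def)
      finally have "cinner b (H *v v) = 0" . }
    then show ?thesis by (simp add: S_def)
  qed
  have clS: "closed S"
  proof -
    have "S = (\<Inter>b\<in>B. {v. cinner b v = 0})" by (auto simp: S_def)
    moreover have "closed {v::complex^'n. cinner b v = 0}" for b
      by (rule closed_Collect_eq) (auto intro: cinner_continuous continuous_intros)
    ultimately show ?thesis by auto
  qed
  define K where "K = S \<inter> sphere 0 1"
  have cK: "compact K" unfolding K_def using clS by (intro closed_Int_compact) auto
  have "(1 / norm x) *\<^sub>R x \<in> K" using x0 xS S_scaleR by (simp add: K_def)
  then have neK: "K \<noteq> {}" by auto
  define f where "f v = Re (cinner v (H *v v))" for v :: "complex^'n"
  have contf: "continuous_on K f"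
    unfolding f_def cinner_def matrix_vector_mult_def by (intro continuous_intros)
  obtain v where vK: "v \<in> K" and vmax: "\<forall>y\<in>K. f y \<le> f v"
    using continuous_attains_sup[OF cK neK contf] by blast
  define mu where "mu = f v"
  have vS: "v \<in> S" and nv: "norm v = 1" using vK by (auto simp: K_def)
  have vv: "cinner v v = 1" using nv by (simp add: cinner_self_real)
  have f_scaleR: "f (r *\<^sub>R u) = r^2 * f u" for r u
    by (simp add: f_def mvec_scaleR cinner_scaleR_left cinner_scaleR_right power2_eq_square)
  have bound: "f u \<le> mu * (norm u)^2" if uS: "u \<in> S" for u
  proof (cases "u = 0")
    case True then show ?thesis by (simp add: f_def)
  next
    case False
    have "(1 / norm u) *\<^sub>R u \<in> K" using False uS S_scaleR by (simp add: K_def)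
    then have "f ((1 / norm u) *\<^sub>R u) \<le> mu" using vmax mu_def by auto
    then have "f u / (norm u)^2 \<le> mu" by (simp add: f_scaleR power_divide)
    then show ?thesis using False by (simp add: divide_le_eq)
  qed
  define c where "c = cinner v (H *v v)"
  define w where "w = H *v v - c *s v"
  have wS: "w \<in> S" unfolding w_def using S_H[OF vS] S_scal[OF vS, of "-c"] S_add
    by (metis diff_conv_add_uminus vector_smult_lneg)
  have vw: "cinner v w = 0" by (simp add: w_def cinner_diff_right cinner_scal_right vv c_def)
  have wv: "cinner w v = 0" using cinner_cnj[of v w] vw by simp
  define W where "W = (norm w)^2"
  have wHv: "cinner w (H *v v) = of_real W"
  proof -
    have "H *v v = w + c *s v" by (simp add: w_def)
    then have "cinner w (H *v v) = cinner w w + c * cinner w v" by (simp add: cinner_add_right cinner_scal_right)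
    then show ?thesis by (simp add: wv W_def cinner_self_real)
  qed
  have vHw: "cinner v (H *v w) = of_real W"
    using cinner_herm[OF herm, of v w] cinner_cnj[of w "H *v v"] wHv by simp
  have ineq: "mu + 2 * t * W + t^2 * f w \<le> mu * (1 + t^2 * W)" for t :: real
  proof -
    define u where "u = v + t *\<^sub>R w"
    have uS: "u \<in> S" unfolding u_def by (intro S_add vS S_scaleR wS)
    have Hu: "H *v u = H *v v + t *\<^sub>R (H *v w)" by (simp add: u_def matrix_vector_right_distrib mvec_scaleR)
    have "cinner u (H *v u) = cinner v (H *v v) + of_real t * cinner v (H *v w) + of_real t * cinner w (H *v v)
        + of_real t * of_real t * cinner w (H *v w)"
      unfolding Hu by (simp add: u_def cinner_add_left cinner_add_right cinner_scaleR_left cinner_scaleR_right algebra_simps)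
    then have fu: "f u = mu + 2 * t * W + t^2 * f w"
      by (simp add: f_def mu_def vHw wHv power2_eq_square)
    have "cinner u u = cinner v v + of_real t * cinner v w + of_real t * cinner w v + of_real t * of_real t * cinner w w"
      by (simp add: u_def cinner_add_left cinner_add_right cinner_scaleR_left cinner_scaleR_right algebra_simps)
    then have "cinner u u = 1 + of_real (t * t) * cinner w w" by (simp add: vv vw wv)
    then have "Re (cinner u u) = 1 + t * t * Re (cinner w w)" by simp
    then have "(norm u)^2 = 1 + t^2 * W"
      using norm_cinner[of u] norm_cinner[of w] by (simp add: W_def power2_eq_square)
    with bound[OF uS] fu show ?thesis by simp
  qed
  have W0: "W = 0"
  proof (rule ccontr)
    assume "W \<noteq> 0"
    then have Wp: "W > 0" by (simp add: W_def)
    define A where "A = mu * W - f w"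
    have i1: "2 * W \<le> A" using ineq[of 1] by (simp add: A_def algebra_simps)
    then have Ap: "A > 0" using Wp by simp
    have "mu + 2 * (W/A) * W + (W/A)^2 * f w \<le> mu * (1 + (W/A)^2 * W)" using ineq[of "W/A"] .
    then have "2 * (W/A) * W \<le> (W/A)^2 * A" by (simp add: A_def algebra_simps)
    then have "2 * W * W / A \<le> W * W / A" using Ap by (simp add: power2_eq_square field_simps)
    then have "2 * (W * W) \<le> W * W" using Ap by (simp add: divide_right_mono_neg field_simps)
    then show False using Wp by (simp add: zero_less_mult_iff)
  qed
  then have "w = 0" by (simp add: W_def)
  then have Hv: "H *v v = c *s v" by (simp add: w_def)
  have "cnj c = c"
    using cinner_cnj[of v "H *v v"] cinner_herm[OF herm, of v v] by (simp add: c_def)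
  then have "c = of_real (Re c)" by (simp add: complex_eq_iff)
  then have "H *v v = of_real (Re c) *s v" using Hv by simp
  moreover have "\<forall>b\<in>B. cinner b v = 0" using vS by (simp add: S_def)
  ultimately show ?thesis using vv by blast
qed


lemma eig_basis:
  fixes H :: "complex^'n^'n"
  assumes herm: "cadj H = H"
  shows "\<exists>B. finite B \<and> card B = CARD('n) \<and> (\<forall>b\<in>B. \<forall>b'\<in>B. cinner b b' = (if b = b' then 1 else 0))
          \<and> (\<forall>b\<in>B. \<exists>c::real. H *v b = of_real c *s b)"
proof -
  have "\<forall>k. k \<le> CARD('n) \<longrightarrow> (\<exists>B. finite B \<and> card B = k \<and> (\<forall>b\<in>B. \<forall>b'\<in>B. cinner b b' = (if b = b' then 1 else 0))
          \<and> (\<forall>b\<in>B. \<exists>c::real. H *v b = of_real c *s b))"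
  proof (intro allI impI)
    fix k assume "k \<le> CARD('n)"
    then show "\<exists>B. finite B \<and> card B = k \<and> (\<forall>b\<in>B. \<forall>b'\<in>B. cinner b b' = (if b = b' then 1 else 0))
          \<and> (\<forall>b\<in>B. \<exists>c::real. H *v b = of_real c *s b)"
    proof (induction k)
      case 0
      show ?case by (rule exI[of _ "{}"]) simp
    next
      case (Suc k)
      then obtain B where fB: "finite B" and cB: "card B = k"
        and oB: "\<forall>b\<in>B. \<forall>b'\<in>B. cinner b b' = (if b = b' then 1 else 0)"
        and eB: "\<forall>b\<in>B. \<exists>c::real. H *v b = of_real c *s b" by auto
      obtain v c where vv: "cinner v v = 1" and vB: "\<forall>b\<in>B. cinner b v = 0" and Hv: "H *v v = of_real c *s v"
        using eig_step[OF herm fB eB] cB Suc.prems by auto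
      have vnB: "v \<notin> B" using vB vv by auto
      have Bv: "\<forall>b\<in>B. cinner v b = 0" using vB cinner_cnj by (metis complex_cnj_zero)
      show ?case
      proof (intro exI[of _ "insert v B"] conjI)
        show "finite (insert v B)" using fB by simp
        show "card (insert v B) = Suc k" using fB vnB cB by simp
        show "\<forall>b\<in>insert v B. \<forall>b'\<in>insert v B. cinner b b' = (if b = b' then 1 else 0)"
          using oB vB Bv vv vnB by auto
        show "\<forall>b\<in>insert v B. \<exists>c::real. H *v b = of_real c *s b" using eB Hv by auto
      qed
    qed
  qed
  then show ?thesis by blast
qed

definition dmat :: "('n \<Rightarrow> complex) \<Rightarrow> complex^'n^'n" where
  "dmat d = (\<chi> i j. if i = j then d i else 0)"

definition unitm :: "complex^'n^'n \<Rightarrow> bool" where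
  "unitm U \<longleftrightarrow> cadj U ** U = mat 1 \<and> U ** cadj U = mat 1"

lemma sdec_entry: "(U ** dmat d ** cadj U) $ i $ j = (\<Sum>l\<in>UNIV. U$i$l * d l * cnj (U$j$l))"
proof -
  have "(U ** dmat d) $ i $ m = U$i$m * d m" for m
    by (simp add: matrix_matrix_mult_def dmat_def if_distrib cong: if_cong)
  then show ?thesis by (simp add: matrix_matrix_mult_def cadj_def)
qed

lemma herm_spectral:
  fixes H :: "complex^'n^'n"
  assumes herm: "cadj H = H"
  shows "\<exists>U d. unitm U \<and> H = U ** dmat (\<lambda>k. complex_of_real (d k)) ** cadj U"
proof -
  obtain B where fB: "finite B" and cB: "card B = CARD('n)"
    and oB: "\<forall>b\<in>B. \<forall>b'\<in>B. cinner b b' = (if b = b' then 1 else 0)"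
    and eB: "\<forall>b\<in>B. \<exists>c::real. H *v b = of_real c *s b" using eig_basis[OF herm] by auto
  obtain e where e: "bij_betw e (UNIV::'n set) B"
    using finite_same_card_bij[of "UNIV::'n set" B] fB cB by auto
  define ev where "ev b = (SOME c::real. H *v b = of_real c *s b)" for b
  have ev: "H *v b = of_real (ev b) *s b" if "b \<in> B" for b
    unfolding ev_def using someI_ex[OF eB[rule_format, OF that]] .
  define U :: "complex^'n^'n" where "U = (\<chi> i k. e k $ i)"
  have eB': "e k \<in> B" for k using e by (auto simp: bij_betw_def)
  have einj: "e k = e l \<longleftrightarrow> k = l" for k l using e by (auto simp: bij_betw_def inj_on_def)
  have UU: "cadj U ** U = mat 1"
  proof -
    have "(cadj U ** U) $ k $ l = cinner (e k) (e l)" for k l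
      by (simp add: matrix_matrix_mult_def cadj_def U_def cinner_def)
    then show ?thesis using oB eB' einj by (simp add: vec_eq_iff mat_def)
  qed
  then have UU2: "U ** cadj U = mat 1" using matrix_left_right_inverse by blast
  define d where "d k = ev (e k)" for k
  have HU: "H ** U = U ** dmat (\<lambda>k. complex_of_real (d k))"
  proof -
    have "(H ** U) $ i $ k = (H *v e k) $ i" for i k
      by (simp add: matrix_matrix_mult_def matrix_vector_mult_def U_def)
    moreover have "(U ** dmat (\<lambda>k. complex_of_real (d k))) $ i $ k = U $ i $ k * d k" for i k
      by (simp add: matrix_matrix_mult_def dmat_def if_distrib cong: if_cong)
    ultimately show ?thesis using ev[OF eB'] by (simp add: vec_eq_iff U_def d_def mult.commute)
  qed
  have "H = H ** (U ** cadj U)" by (simp add: UU2)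
  also have "\<dots> = U ** dmat (\<lambda>k. complex_of_real (d k)) ** cadj U" by (simp add: matrix_mul_assoc HU)
  finally show ?thesis using UU UU2 unfolding unitm_def by blast
qed


lemma sdec_eq_iff: "A = U ** dmat d ** cadj U \<longleftrightarrow> (\<forall>i j. A $ i $ j = (\<Sum>l\<in>UNIV. U$i$l * d l * cnj (U$j$l)))"
  by (simp add: vec_eq_iff sdec_entry)

lemma skew_spectral:
  fixes X :: "complex^'n^'n"
  assumes skew: "cadj X = - X"
  shows "\<exists>U r. unitm U \<and> X = U ** dmat (\<lambda>k. \<i> * complex_of_real (r k)) ** cadj U"
proof -
  define H :: "complex^'n^'n" where "H = (\<chi> i j. - \<i> * X $ i $ j)"
  have "cadj X $ i $ j = - X $ i $ j" for i j using skew by simp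
  then have cX: "cnj (X $ j $ i) = - X $ i $ j" for i j by (simp add: cadj_def)
  have "cadj H = H" by (simp add: vec_eq_iff cadj_def H_def cX)
  then obtain U d where U: "unitm U" and Hd: "H = U ** dmat (\<lambda>k. complex_of_real (d k)) ** cadj U"
    using herm_spectral by blast
  have "X $ i $ j = \<i> * H $ i $ j" for i j by (simp add: H_def)
  then have "X = U ** dmat (\<lambda>k. \<i> * complex_of_real (d k)) ** cadj U"
    unfolding sdec_eq_iff using Hd unfolding sdec_eq_iff by (simp add: sum_distrib_left mult_ac)
  then show ?thesis using U by blast
qed

lemma dmat_mult: "dmat a ** dmat b = dmat (\<lambda>k. a k * b k)"
proof -
  have "(\<Sum>k\<in>UNIV. (if i = k then a i else 0) * (if k = j then b k else 0))
     = (if i = j then a i * b i else 0)" for i j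
  proof -
    have "\<And>k. (if i = k then a i else 0) * (if k = j then b k else 0) = (if k = i then (if i = j then a i * b i else 0) else 0)"
      by auto
    then show ?thesis by simp
  qed
  then show ?thesis by (simp add: vec_eq_iff matrix_matrix_mult_def dmat_def)
qed

lemma dmat_one: "dmat (\<lambda>k. 1) = mat 1"
  by (simp add: vec_eq_iff dmat_def mat_def)

lemma sdec_mult:
  assumes "unitm U"
  shows "(U ** dmat a ** cadj U) ** (U ** dmat b ** cadj U) = U ** dmat (\<lambda>k. a k * b k) ** cadj U"
proof -
  have "(U ** dmat a ** cadj U) ** (U ** dmat b ** cadj U) = U ** dmat a ** (cadj U ** U) ** dmat b ** cadj U"
    by (simp add: matrix_mul_assoc)
  also have "\<dots> = U ** (dmat a ** dmat b) ** cadj U" using assms by (simp add: unitm_def matrix_mul_assoc)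
  finally show ?thesis by (simp add: dmat_mult)
qed

lemma sdec_one: "unitm U \<Longrightarrow> U ** dmat (\<lambda>k. 1) ** cadj U = mat 1"
  by (simp add: dmat_one unitm_def)

lemma mpow_Suc: "mpow X (Suc k) = X ** mpow X k"
  by (simp add: mpow_def)

lemma mpow_sdec:
  assumes "unitm U"
  shows "mpow (U ** dmat a ** cadj U) k = U ** dmat (\<lambda>l. a l ^ k) ** cadj U"
proof (induction k)
  case 0
  then show ?case using sdec_one[OF assms] by (simp add: mpow_def)
next
  case (Suc k)
  then show ?case by (simp add: mpow_Suc sdec_mult[OF assms])
qed

lemma mexp_sdec:
  assumes U: "unitm U"
  shows "mexp (U ** dmat a ** cadj U) = U ** dmat (\<lambda>l. exp (a l)) ** cadj U"
proof -
  have "(\<lambda>k. (mpow (U ** dmat a ** cadj U) k) $ i $ j / of_nat (fact k))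
        sums (\<Sum>l\<in>UNIV. U$i$l * exp (a l) * cnj (U$j$l))" for i j
  proof -
    have e: "(\<lambda>k. a l ^ k / of_nat (fact k)) sums exp (a l)" for l
      using exp_converges[of "a l"] by (simp add: scaleR_conv_of_real divide_inverse mult.commute)
    have "(\<lambda>k. \<Sum>l\<in>UNIV. U$i$l * cnj (U$j$l) * (a l ^ k / of_nat (fact k)))
        sums (\<Sum>l\<in>UNIV. U$i$l * cnj (U$j$l) * exp (a l))"
      by (intro sums_sum sums_mult e)
    moreover have "(mpow (U ** dmat a ** cadj U) k) $ i $ j / of_nat (fact k)
        = (\<Sum>l\<in>UNIV. U$i$l * cnj (U$j$l) * (a l ^ k / of_nat (fact k)))" for k
      by (simp add: mpow_sdec[OF U] sdec_entry sum_divide_distrib mult_ac)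
    ultimately show ?thesis by (simp add: mult_ac)
  qed
  then show ?thesis unfolding mexp_def sdec_eq_iff by (simp add: sums_iff)
qed

lemma cadj_entry: "cadj A $ i $ j = cnj (A $ j $ i)"
  by (simp add: cadj_def)

lemma cadj_sdec: "cadj (U ** dmat a ** cadj U) = U ** dmat (\<lambda>l. cnj (a l)) ** cadj U"
  unfolding sdec_eq_iff cadj_entry sdec_entry by (simp add: cnj_sum mult_ac)

lemma trace_sdec:
  assumes U: "unitm U"
  shows "trace (U ** dmat a ** cadj U) = (\<Sum>l\<in>UNIV. a l)"
proof -
  have "trace (U ** dmat a ** cadj U) = (\<Sum>i\<in>UNIV. \<Sum>l\<in>UNIV. U$i$l * a l * cnj (U$i$l))"
    by (simp add: trace_def sdec_entry)
  also have "\<dots> = (\<Sum>l\<in>UNIV. \<Sum>i\<in>UNIV. U$i$l * a l * cnj (U$i$l))" by (rule sum.swap)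
  also have "\<dots> = (\<Sum>l\<in>UNIV. a l * (cadj U ** U) $ l $ l)"
    by (simp add: matrix_matrix_mult_def cadj_def sum_distrib_left mult_ac)
  also have "\<dots> = (\<Sum>l\<in>UNIV. a l)" using U by (simp add: unitm_def mat_def)
  finally show ?thesis .
qed

lemma frob_sdec:
  assumes U: "unitm U"
  shows "frob_sq (U ** dmat a ** cadj U) = (\<Sum>l\<in>UNIV. (cmod (a l))^2)"
proof -
  have "frob_sq (U ** dmat a ** cadj U) = Re (\<Sum>l\<in>UNIV. a l * cnj (a l))"
    by (simp add: frob_sq_def cadj_sdec sdec_mult[OF U] trace_sdec[OF U])
  also have "\<dots> = (\<Sum>l\<in>UNIV. (cmod (a l))^2)"
    by (simp only: Re_sum complex_norm_square[symmetric] Re_complex_of_real)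
  finally show ?thesis .
qed

lemma det_sdec:
  assumes U: "unitm U"
  shows "det (mat x - U ** dmat a ** cadj U) = (\<Prod>l\<in>UNIV. x - a l)"
proof -
  have "mat x = U ** dmat (\<lambda>l. x) ** cadj U"
  proof -
    have "(\<Sum>l\<in>UNIV. U$i$l * x * cnj (U$j$l)) = x * (U ** cadj U) $ i $ j" for i j
      by (simp add: matrix_matrix_mult_def cadj_def sum_distrib_left mult_ac)
    then show ?thesis using U unfolding sdec_eq_iff by (simp add: unitm_def mat_def)
  qed
  then have "mat x - U ** dmat a ** cadj U = U ** dmat (\<lambda>l. x - a l) ** cadj U"
    by (simp add: sdec_eq_iff sdec_entry sum_subtractf algebra_simps)
  then have "det (mat x - U ** dmat a ** cadj U) = det U * det (dmat (\<lambda>l. x - a l)) * det (cadj U)"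
    by (simp add: det_mul)
  also have "\<dots> = det (dmat (\<lambda>l. x - a l)) * det (U ** cadj U)" by (simp add: det_mul)
  also have "\<dots> = (\<Prod>l\<in>UNIV. x - a l)" using U
    by (simp add: unitm_def det_diagonal dmat_def)
  finally show ?thesis .
qed




lemma prod_cont_eq:
  fixes a :: "'k \<Rightarrow> complex" and b :: "'j \<Rightarrow> complex"
  assumes "\<forall>x. x \<noteq> c \<longrightarrow> (\<Prod>k\<in>A. x - a k) = (\<Prod>j\<in>B. x - b j)"
  shows "(\<Prod>k\<in>A. c - a k) = (\<Prod>j\<in>B. c - b j)"
proof -
  have f: "((\<lambda>x. \<Prod>k\<in>A. x - a k) \<longlongrightarrow> (\<Prod>k\<in>A. c - a k)) (at c)"
    by (intro tendsto_intros)
  have g: "((\<lambda>x. \<Prod>j\<in>B. x - b j) \<longlongrightarrow> (\<Prod>j\<in>B. c - b j)) (at c)"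
    by (intro tendsto_intros)
  have ev: "eventually (\<lambda>x. (\<Prod>j\<in>B. x - b j) = (\<Prod>k\<in>A. x - a k)) (at c)"
    using assms by (auto simp: eventually_at_filter)
  have "((\<lambda>x. \<Prod>k\<in>A. x - a k) \<longlongrightarrow> (\<Prod>j\<in>B. c - b j)) (at c)"
    using tendsto_cong[OF ev] g by blast
  then show ?thesis using f tendsto_unique by (metis trivial_limit_at)
qed

lemma roots_match:
  fixes a :: "'k \<Rightarrow> complex" and b :: "'j \<Rightarrow> complex"
  assumes "finite B" "finite A" "\<forall>x. (\<Prod>k\<in>A. x - a k) = (\<Prod>j\<in>B. x - b j)"
  shows "\<exists>p. bij_betw p B A \<and> (\<forall>j\<in>B. a (p j) = b j)"
  using assms
proof (induction B arbitrary: A rule: finite_induct)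
  case empty
  have "A = {}"
  proof (rule ccontr)
    assume "A \<noteq> {}"
    then obtain k where "k \<in> A" by auto
    then have "(\<Prod>k'\<in>A. a k - a k') = 0" using empty.prems(1) by (auto intro: prod_zero)
    then show False using empty.prems(2) by simp
  qed
  then show ?case by (auto simp: bij_betw_def)
next
  case (insert j B)
  have "(\<Prod>k\<in>A. b j - a k) = (\<Prod>j'\<in>insert j B. b j - b j')" using insert.prems by blast
  also have "\<dots> = 0" using insert.hyps by (auto intro: prod_zero)
  finally obtain k where kA: "k \<in> A" and akb: "a k = b j" using insert.prems(1) by auto
  define A' where "A' = A - {k}"
  have fA': "finite A'" using insert.prems A'_def by auto
  have eq1: "(\<Prod>k\<in>A. x - a k) = (x - b j) * (\<Prod>k\<in>A'. x - a k)" for x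
    using prod.remove[OF insert.prems(1) kA, of "\<lambda>k. x - a k"] akb by (simp add: A'_def)
  have eq2: "(\<Prod>j'\<in>insert j B. x - b j') = (x - b j) * (\<Prod>j'\<in>B. x - b j')" for x
    using insert.hyps by simp
  have "\<forall>x. x \<noteq> b j \<longrightarrow> (\<Prod>k\<in>A'. x - a k) = (\<Prod>j'\<in>B. x - b j')"
    using insert.prems(2) eq1 eq2 by auto
  then have "\<forall>x. (\<Prod>k\<in>A'. x - a k) = (\<Prod>j'\<in>B. x - b j')"
    using prod_cont_eq[where c="b j" and A=A' and B=B and a=a and b=b] by metis
  then obtain p where p: "bij_betw p B A'" "\<forall>j'\<in>B. a (p j') = b j'"
    using insert.IH[OF fA'] by blast
  define p' where "p' = p(j := k)"
  have "bij_betw p' (insert j B) A"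
  proof -
    have "p' ` (insert j B) = A"
    proof -
      have "p' ` B = p ` B" using insert.hyps by (auto simp: p'_def)
      then have "p' ` B = A'" using p(1) by (simp add: bij_betw_def)
      then show ?thesis using kA by (auto simp: A'_def p'_def)
    qed
    moreover have "inj_on p' (insert j B)"
    proof -
      have "inj_on p' B" using p(1) insert.hyps by (auto simp: bij_betw_def inj_on_def p'_def)
      moreover have "p' j \<notin> p' ` B" using p(1) insert.hyps
        by (auto simp: bij_betw_def p'_def A'_def)
      ultimately show ?thesis using insert.hyps by simp
    qed
    ultimately show ?thesis by (simp add: bij_betw_def)
  qed
  moreover have "\<forall>j'\<in>insert j B. a (p' j') = b j'" using p(2) akb insert.hyps by (auto simp: p'_def)
  ultimately show ?case by blast
qed




lemma unit_exp_Arg: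
  assumes "cmod z = 1" shows "z = exp (\<i> * complex_of_real (Arg z))"
proof -
  have "z \<noteq> 0" using assms by auto
  then have "cis (Arg z) = sgn z" by (rule cis_Arg)
  also have "sgn z = z" using assms by (simp add: sgn_div_norm)
  finally show ?thesis by (simp add: cis_conv_exp)
qed

lemma sdec_neg: "- (U ** dmat a ** cadj U) = U ** dmat (\<lambda>l. - a l) ** cadj U"
  by (simp add: sdec_eq_iff sdec_entry sum_negf[symmetric])

lemma su_frob:
  fixes X Q :: "complex^'n^'n" and mu :: "nat \<Rightarrow> complex"
  assumes X: "X \<in> su" "mexp X = Q" and eig: "eigvals_mult Q mu"
    and mu1: "\<forall>j\<in>{1..CARD('n)}. mu j = exp (\<i> * complex_of_real (Arg (mu j)))"
  shows "\<exists>k::nat\<Rightarrow>int. (\<Sum>j=1..CARD('n). Arg (mu j)) + 2*pi*(\<Sum>j=1..CARD('n). real_of_int (k j)) = 0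
     \<and> frob_sq X = (\<Sum>j=1..CARD('n). (Arg (mu j) + 2*pi*k j)^2)"
proof -
  have skew: "cadj X = - X" and tr: "trace X = 0" using X by (auto simp: su_def)
  obtain U r where U: "unitm U" and Xd: "X = U ** dmat (\<lambda>k. \<i> * complex_of_real (r k)) ** cadj U"
    using skew_spectral[OF skew] by blast
  have Qd: "Q = U ** dmat (\<lambda>k. exp (\<i> * complex_of_real (r k))) ** cadj U"
    using X(2) Xd mexp_sdec[OF U] by simp
  have "\<forall>x. (\<Prod>k\<in>UNIV. x - exp (\<i> * complex_of_real (r k))) = (\<Prod>j=1..CARD('n). x - mu j)"
    using eig det_sdec[OF U] Qd by (simp add: eigvals_mult_def)
  then obtain q where q: "bij_betw q {1..CARD('n)} (UNIV::'n set)"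
    and qe: "\<forall>j\<in>{1..CARD('n)}. exp (\<i> * complex_of_real (r (q j))) = mu j"
    using roots_match[where B="{1..CARD('n)}" and A="UNIV::'n set" and b=mu
        and a="\<lambda>k. exp (\<i> * complex_of_real (r k))"] by auto
  have "\<forall>j\<in>{1..CARD('n)}. \<exists>m::int. r (q j) = Arg (mu j) + 2*pi*m"
  proof
    fix j assume j: "j \<in> {1..CARD('n)}"
    have "exp (\<i> * complex_of_real (r (q j))) = exp (\<i> * complex_of_real (Arg (mu j)))"
      using qe mu1 j by metis
    then obtain m :: int where "\<i> * complex_of_real (r (q j)) = \<i> * complex_of_real (Arg (mu j)) + (of_int (2 * m) * pi) * \<i>"
      unfolding exp_eq by blast
    then have "r (q j) = Arg (mu j) + 2*pi*m" by (simp add: complex_eq_iff)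
    then show "\<exists>m::int. r (q j) = Arg (mu j) + 2*pi*m" by blast
  qed
  then obtain k :: "nat \<Rightarrow> int" where k: "\<forall>j\<in>{1..CARD('n)}. r (q j) = Arg (mu j) + 2*pi*k j"
    by (metis (no_types) bchoice)
  have "frob_sq X = (\<Sum>l\<in>UNIV. (cmod (\<i> * complex_of_real (r l)))^2)"
    using frob_sdec[OF U] Xd by simp
  also have "\<dots> = (\<Sum>l\<in>UNIV. (r l)^2)" by (simp add: norm_mult)
  also have "\<dots> = (\<Sum>j=1..CARD('n). (r (q j))^2)" using sum.reindex_bij_betw[OF q, of "\<lambda>l. (r l)^2"] by simp
  also have "\<dots> = (\<Sum>j=1..CARD('n). (Arg (mu j) + 2*pi*k j)^2)" using k by (intro sum.cong) auto
  finally have fr: "frob_sq X = (\<Sum>j=1..CARD('n). (Arg (mu j) + 2*pi*k j)^2)" .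
  have "0 = (\<Sum>l\<in>UNIV. \<i> * complex_of_real (r l))" using tr trace_sdec[OF U] Xd by simp
  then have "(\<Sum>l\<in>UNIV. r l) = 0"
    by (simp add: sum_distrib_left[symmetric] of_real_sum[symmetric] del: of_real_sum)
  then have "(\<Sum>j=1..CARD('n). r (q j)) = 0" using sum.reindex_bij_betw[OF q, of r] by simp
  then have "(\<Sum>j=1..CARD('n). Arg (mu j) + 2*pi*k j) = 0" using k by (metis (no_types, lifting) sum.cong)
  then have "(\<Sum>j=1..CARD('n). Arg (mu j)) + 2*pi*(\<Sum>j=1..CARD('n). real_of_int (k j)) = 0"
    by (simp add: sum.distrib sum_distrib_left)
  with fr show ?thesis by blast
qed


lemma X0_facts:
  fixes X0 Q :: "complex^'n^'n" and mu :: "nat \<Rightarrow> complex" and h :: "nat \<Rightarrow> int"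
  assumes X0: "X0 \<in> su" "mexp X0 = Q" and eig: "eigvals_mult Q mu"
    and eigX0: "eigvals_mult X0 (\<lambda>j. \<i> * complex_of_real (Arg (mu j) + 2 * of_int (h j) * pi))"
  shows "\<forall>j\<in>{1..CARD('n)}. cmod (mu j) = 1"
    and "frob_sq X0 = (\<Sum>j=1..CARD('n). (Arg (mu j) + 2*pi*h j)^2)"
    and "\<And>h'::nat\<Rightarrow>int. (\<Sum>j=1..CARD('n). real_of_int (h' j)) = (\<Sum>j=1..CARD('n). real_of_int (h j)) \<Longrightarrow>
          \<exists>X. X \<in> su \<and> mexp X = Q \<and> frob_sq X = (\<Sum>j=1..CARD('n). (Arg (mu j) + 2*pi*h' j)^2)"
    and "(\<Sum>j=1..CARD('n). Arg (mu j)) + 2 * pi * (\<Sum>j=1..CARD('n). real_of_int (h j)) = 0"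
proof -
  let ?N = "{1..CARD('n)}"
  have skew: "cadj X0 = - X0" and tr: "trace X0 = 0" using X0 by (auto simp: su_def)
  obtain U r where U: "unitm U" and Xd: "X0 = U ** dmat (\<lambda>k. \<i> * complex_of_real (r k)) ** cadj U"
    using skew_spectral[OF skew] by blast
  define d0 where "d0 k = \<i> * complex_of_real (r k)" for k
  have Xd': "X0 = U ** dmat d0 ** cadj U" using Xd by (simp add: d0_def[abs_def])
  have Qd: "Q = U ** dmat (\<lambda>k. exp (d0 k)) ** cadj U"
    using X0(2) Xd' mexp_sdec[OF U] by simp
  have "\<forall>x. (\<Prod>k\<in>UNIV. x - d0 k) = (\<Prod>j=1..CARD('n). x - \<i> * complex_of_real (Arg (mu j) + 2 * of_int (h j) * pi))"
    using eigX0 det_sdec[OF U] Xd' by (simp add: eigvals_mult_def)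
  then obtain p where p: "bij_betw p ?N (UNIV::'n set)"
    and pe: "\<forall>j\<in>?N. d0 (p j) = \<i> * complex_of_real (Arg (mu j) + 2 * of_int (h j) * pi)"
    using roots_match[where B="?N" and A="UNIV::'n set" and a=d0
        and b="\<lambda>j. \<i> * complex_of_real (Arg (mu j) + 2 * of_int (h j) * pi)"] by auto
  have "\<forall>x. (\<Prod>k\<in>UNIV. x - exp (d0 k)) = (\<Prod>j=1..CARD('n). x - mu j)"
    using eig det_sdec[OF U] Qd by (simp add: eigvals_mult_def)
  then obtain q where q: "bij_betw q ?N (UNIV::'n set)"
    and qe: "\<forall>j\<in>?N. exp (d0 (q j)) = mu j"
    using roots_match[where B="?N" and A="UNIV::'n set" and a="\<lambda>k. exp (d0 k)" and b=mu] by auto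
  show mu1: "\<forall>j\<in>?N. cmod (mu j) = 1"
  proof
    fix j assume "j \<in> ?N"
    then have "mu j = exp (\<i> * complex_of_real (r (q j)))" using qe by (simp add: d0_def)
    then show "cmod (mu j) = 1" by simp
  qed
  have muA: "mu j = exp (\<i> * complex_of_real (Arg (mu j)))" if "j \<in> ?N" for j
    using unit_exp_Arg mu1 that by blast
  have expsh: "exp (\<i> * complex_of_real (Arg (mu j) + 2 * of_int (g j) * pi)) = mu j"
    if "j \<in> ?N" for j and g :: "nat \<Rightarrow> int"
  proof -
    have "exp (\<i> * complex_of_real (Arg (mu j) + 2 * of_int (g j) * pi)) = exp (\<i> * complex_of_real (Arg (mu j)))"
      unfolding exp_eq by (rule exI[of _ "g j"]) (simp add: algebra_simps)
    then show ?thesis using muA[OF that] by simp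
  qed
  have reidx: "(\<Sum>k\<in>UNIV. f k) = (\<Sum>j\<in>?N. f (p j))" for f :: "'n \<Rightarrow> 'b::comm_monoid_add"
    using sum.reindex_bij_betw[OF p, of f] by simp
  have cm: "(cmod (\<i> * complex_of_real x))^2 = x^2" for x by (simp add: norm_mult)
  have "frob_sq X0 = (\<Sum>k\<in>UNIV. (cmod (d0 k))^2)" using frob_sdec[OF U] Xd' by simp
  also have "\<dots> = (\<Sum>j\<in>?N. (cmod (d0 (p j)))^2)" by (rule reidx)
  also have "\<dots> = (\<Sum>j\<in>?N. (Arg (mu j) + 2*pi*h j)^2)"
  proof (rule sum.cong[OF refl])
    fix j assume j: "j \<in> ?N"
    have "(cmod (d0 (p j)))^2 = (Arg (mu j) + 2 * of_int (h j) * pi)^2"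
      by (subst pe[rule_format, OF j]) (rule cm)
    then show "(cmod (d0 (p j)))^2 = (Arg (mu j) + 2*pi*h j)^2" by (simp add: mult_ac)
  qed
  finally show "frob_sq X0 = (\<Sum>j=1..CARD('n). (Arg (mu j) + 2*pi*h j)^2)" .
  have "0 = (\<Sum>k\<in>UNIV. d0 k)" using tr trace_sdec[OF U] Xd' by simp
  also have "\<dots> = (\<Sum>j\<in>?N. d0 (p j))" by (rule reidx)
  also have "\<dots> = (\<Sum>j\<in>?N. \<i> * complex_of_real (Arg (mu j) + 2 * of_int (h j) * pi))"
    using pe by (intro sum.cong) auto
  also have "\<dots> = \<i> * complex_of_real (\<Sum>j\<in>?N. Arg (mu j) + 2 * of_int (h j) * pi)"
    by (simp only: of_real_sum sum_distrib_left)
  also have "(\<Sum>j\<in>?N. Arg (mu j) + 2 * of_int (h j) * pi) = (\<Sum>j\<in>?N. Arg (mu j)) + 2 * pi * (\<Sum>j\<in>?N. real_of_int (h j))"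
    by (simp add: sum_distrib_left sum.distrib mult_ac)
  finally have sum0: "(\<Sum>j\<in>?N. Arg (mu j)) + 2 * pi * (\<Sum>j\<in>?N. real_of_int (h j)) = 0"
    by (simp add: complex_eq_iff)
  then show "(\<Sum>j=1..CARD('n). Arg (mu j)) + 2 * pi * (\<Sum>j=1..CARD('n). real_of_int (h j)) = 0" .
  fix h' :: "nat \<Rightarrow> int"
  assume hs: "(\<Sum>j=1..CARD('n). real_of_int (h' j)) = (\<Sum>j=1..CARD('n). real_of_int (h j))"
  define pinv where "pinv = inv_into ?N p"
  have pinv1: "pinv k \<in> ?N" for k using p unfolding pinv_def bij_betw_def
    by (metis UNIV_I inv_into_into)
  have pinv2: "p (pinv k) = k" for k using p unfolding pinv_def bij_betw_def
    by (simp add: f_inv_into_f)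
  have pinv3: "pinv (p j) = j" if "j \<in> ?N" for j using p that unfolding pinv_def bij_betw_def
    by (simp add: inv_into_f_f)
  define d' where "d' k = \<i> * complex_of_real (Arg (mu (pinv k)) + 2 * of_int (h' (pinv k)) * pi)" for k
  define X where "X = U ** dmat d' ** cadj U"
  have ed: "exp (d' k) = exp (d0 k)" for k
  proof -
    have "exp (d' k) = mu (pinv k)" unfolding d'_def using expsh[OF pinv1] by blast
    also have "\<dots> = exp (d0 (p (pinv k)))" using expsh[OF pinv1, where g=h] pe pinv1 by metis
    finally show ?thesis using pinv2 by simp
  qed
  have mX: "mexp X = Q" unfolding X_def mexp_sdec[OF U] Qd using ed by simp
  have cX: "cadj X = - X" unfolding X_def cadj_sdec sdec_neg
    by (simp add: d'_def)
  have "trace X = (\<Sum>k\<in>UNIV. d' k)" using trace_sdec[OF U] X_def by simp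
  also have "\<dots> = (\<Sum>j\<in>?N. d' (p j))" by (rule reidx)
  also have "\<dots> = (\<Sum>j\<in>?N. \<i> * complex_of_real (Arg (mu j) + 2 * of_int (h' j) * pi))"
    using pinv3 by (intro sum.cong) (auto simp: d'_def)
  also have "\<dots> = \<i> * complex_of_real (\<Sum>j\<in>?N. Arg (mu j) + 2 * of_int (h' j) * pi)"
    by (simp only: of_real_sum sum_distrib_left)
  also have "(\<Sum>j\<in>?N. Arg (mu j) + 2 * of_int (h' j) * pi) = (\<Sum>j\<in>?N. Arg (mu j)) + 2 * pi * (\<Sum>j\<in>?N. real_of_int (h' j))"
    by (simp add: sum_distrib_left sum.distrib mult_ac)
  also have "\<dots> = 0" using sum0 hs by simp
  finally have tX: "trace X = 0" by simp
  have "frob_sq X = (\<Sum>k\<in>UNIV. (cmod (d' k))^2)" using frob_sdec[OF U] X_def by simp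
  also have "\<dots> = (\<Sum>j\<in>?N. (cmod (d' (p j)))^2)" by (rule reidx)
  also have "\<dots> = (\<Sum>j\<in>?N. (Arg (mu j) + 2*pi*h' j)^2)"
  proof (rule sum.cong[OF refl])
    fix j assume j: "j \<in> ?N"
    have "(cmod (d' (p j)))^2 = (Arg (mu j) + 2 * of_int (h' j) * pi)^2"
      unfolding d'_def pinv3[OF j] by (rule cm)
    then show "(cmod (d' (p j)))^2 = (Arg (mu j) + 2*pi*h' j)^2" by (simp add: mult_ac)
  qed
  finally have fX: "frob_sq X = (\<Sum>j=1..CARD('n). (Arg (mu j) + 2*pi*h' j)^2)" .
  show "\<exists>X. X \<in> su \<and> mexp X = Q \<and> frob_sq X = (\<Sum>j=1..CARD('n). (Arg (mu j) + 2*pi*h' j)^2)"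
    using mX cX tX fX by (auto simp: su_def)
qed

lemma final_core:
  fixes Q X0 :: "complex^'n^'n" and mu :: "nat \<Rightarrow> complex" and h :: "nat \<Rightarrow> int"
  assumes X0: "X0 \<in> su" "mexp X0 = Q" and eig: "eigvals_mult Q mu"
    and eigX0: "eigvals_mult X0 (\<lambda>j. \<i> * complex_of_real (Arg (mu j) + 2 * of_int (h j) * pi))"
    and L: "L \<le> CARD('n)" and lam: "0 \<le> lam" "lam < 8*pi^2"
    and lo: "\<forall>j\<in>{1..L}. lam \<le> 4*pi*(pi - Arg (mu j))"
    and hi: "\<forall>j\<in>{L+1..CARD('n)}. 4*pi*(pi - Arg (mu j)) \<le> lam"
    and hs: "(\<Sum>j=1..CARD('n). h j) = - int (CARD('n) - L)"
  shows "m_Q Q = (\<Sum>j=1..L. (Arg (mu j))^2) + (\<Sum>j=L+1..CARD('n). (Arg (mu j) - 2*pi)^2)"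
    and "X0 \<in> Theta Q \<longleftrightarrow> (\<forall>j\<in>{1..CARD('n)}. (h j = 0 \<and> lam \<le> 4*pi*(pi - Arg (mu j)))
            \<or> (h j = -1 \<and> 4*pi*(pi - Arg (mu j)) \<le> lam))"
proof -
  let ?n = "CARD('n)"
  let ?t = "\<lambda>j. Arg (mu j)"
  let ?M = "(\<Sum>j=1..L. (Arg (mu j))^2) + (\<Sum>j=L+1..CARD('n). (Arg (mu j) - 2*pi)^2)"
  have rng: "\<forall>j\<in>{1..?n}. -pi < ?t j \<and> ?t j \<le> pi" by (simp add: mpi_less_Arg Arg_le_pi)
  note CM = comb_main[OF L rng lam lo hi]
  have mu1: "\<forall>j\<in>{1..?n}. mu j = exp (\<i> * complex_of_real (Arg (mu j)))"
    using X0_facts(1)[OF X0 eig eigX0] unit_exp_Arg by blast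
  have s0: "(\<Sum>j=1..?n. Arg (mu j)) + 2 * pi * (\<Sum>j=1..?n. real_of_int (h j)) = 0"
    by (rule X0_facts(4)[OF X0 eig eigX0])
  let ?S = "{frob_sq X | X. X \<in> su \<and> mexp X = Q}"
  have lb: "?M \<le> s" if "s \<in> ?S" for s
  proof -
    obtain X where X: "X \<in> su" "mexp X = Q" "s = frob_sq X" using \<open>s \<in> ?S\<close> by auto
    obtain k :: "nat \<Rightarrow> int" where k1: "(\<Sum>j=1..?n. Arg (mu j)) + 2*pi*(\<Sum>j=1..?n. real_of_int (k j)) = 0"
      and k2: "frob_sq X = (\<Sum>j=1..?n. (Arg (mu j) + 2*pi*k j)^2)"
      using su_frob[OF X(1,2) eig mu1] by blast
    have "2*pi*(\<Sum>j=1..?n. real_of_int (k j)) = 2*pi*(\<Sum>j=1..?n. real_of_int (h j))" using k1 s0 by linarith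
    then have "real_of_int (\<Sum>j=1..?n. k j) = real_of_int (\<Sum>j=1..?n. h j)" by simp
    then have "(\<Sum>j=1..?n. k j) = - int (?n - L)" using hs by linarith
    then show ?thesis using CM(1)[of k] k2 X(3) by simp
  qed
  define hst :: "nat \<Rightarrow> int" where "hst j = (if j \<le> L then 0 else -1)" for j
  have "(\<Sum>j=1..?n. hst j) = (\<Sum>j=1..L. hst j) + (\<Sum>j=L+1..?n. hst j)" using L by (rule sum_split_L)
  also have "(\<Sum>j=1..L. hst j) = 0" by (simp add: hst_def)
  also have "(\<Sum>j=L+1..?n. hst j) = (\<Sum>j=L+1..?n. -1)" by (intro sum.cong) (auto simp: hst_def)
  finally have "(\<Sum>j=1..?n. hst j) = - int (?n - L)" using L by simp
  then have hsts: "(\<Sum>j=1..?n. real_of_int (hst j)) = (\<Sum>j=1..?n. real_of_int (h j))"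
    using hs by (metis of_int_sum)
  obtain Xs where Xs: "Xs \<in> su" "mexp Xs = Q" "frob_sq Xs = (\<Sum>j=1..?n. (Arg (mu j) + 2*pi*hst j)^2)"
    using X0_facts(3)[OF X0 eig eigX0 hsts] by blast
  have "(\<Sum>j=1..?n. (Arg (mu j) + 2*pi*hst j)^2) = ?M"
  proof -
    have "(\<Sum>j=1..?n. hst j) = - int (?n - L)" by fact
    moreover have "\<forall>j\<in>{1..?n}. (hst j = 0 \<and> lam \<le> 4*pi*(pi - ?t j)) \<or> (hst j = -1 \<and> 4*pi*(pi - ?t j) \<le> lam)"
      using lo hi by (auto simp: hst_def)
    ultimately show ?thesis using comb_main(2)[OF L rng lam lo hi, of hst] by simp
  qed
  then have MS: "?M \<in> ?S" using Xs by (metis (mono_tags, lifting) mem_Collect_eq)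
  have mQ: "m_Q Q = ?M" unfolding m_Q_def
    by (rule cInf_eq_minimum[OF MS]) (use lb in blast)
  then show "m_Q Q = ?M" .
  have "X0 \<in> Theta Q \<longleftrightarrow> frob_sq X0 = ?M" using X0 mQ by (simp add: Theta_def)
  also have "\<dots> \<longleftrightarrow> (\<Sum>j=1..?n. (Arg (mu j) + 2*pi*h j)^2) = ?M"
    using X0_facts(2)[OF X0 eig eigX0] by simp
  also have "\<dots> \<longleftrightarrow> (\<forall>j\<in>{1..?n}. (h j = 0 \<and> lam \<le> 4*pi*(pi - ?t j)) \<or> (h j = -1 \<and> 4*pi*(pi - ?t j) \<le> lam))"
    using CM(2)[OF hs] .
  finally show "X0 \<in> Theta Q \<longleftrightarrow> (\<forall>j\<in>{1..CARD('n)}. (h j = 0 \<and> lam \<le> 4*pi*(pi - Arg (mu j)))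
            \<or> (h j = -1 \<and> 4*pi*(pi - Arg (mu j)) \<le> lam))" .
qed

theorem proposition2p8:
  fixes Q X0 :: "complex^'n^'n" and mu :: "nat \<Rightarrow> complex" and h :: "nat \<Rightarrow> int"
  assumes n2: "CARD('n) \<ge> 2"
    and Q: "Q \<in> SU"
    and eig: "eigvals_mult Q mu"
    and sorted: "\<forall>i j. 1 \<le> i \<and> i \<le> j \<and> j \<le> CARD('n) \<longrightarrow> Arg (mu i) \<le> Arg (mu j)"
    and zeta_nonneg: "zeta CARD('n) mu \<ge> 0"
    and X0: "X0 \<in> su" "mexp X0 = Q"
    and eigX0: "eigvals_mult X0 (\<lambda>j. \<i> * complex_of_real (Arg (mu j) + 2 * of_int (h j) * pi))"
    and hsum: "(\<Sum>j=1..CARD('n). real_of_int (h j)) = - zeta CARD('n) mu"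
  shows
    "(zeta CARD('n) mu = 0 \<longrightarrow>
        m_Q Q = (\<Sum>j=1..CARD('n). (Arg (mu j))\<^sup>2) \<and>
        (X0 \<in> Theta Q \<longleftrightarrow> (\<forall>j\<in>{1..CARD('n)}. h j = 0)))
   \<and>
    (zeta CARD('n) mu \<ge> 1 \<longrightarrow>
      (let n = CARD('n); z = nat \<lfloor>zeta CARD('n) mu\<rfloor> in
        m_Q Q = (\<Sum>j=1..n-z. (Arg (mu j))\<^sup>2) + (\<Sum>j=n-z+1..n. (2 * pi - Arg (mu j))\<^sup>2) \<and>
        (mu (n-z) \<noteq> mu (n-z+1) \<longrightarrow>
           (X0 \<in> Theta Q \<longleftrightarrow>
              (\<forall>j\<in>{1..n-z}. h j = 0) \<and> (\<forall>l\<in>{n-z+1..n}. h l = -1))) \<and>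
        (mu (n-z) = mu (n-z+1) \<longrightarrow>
           (X0 \<in> Theta Q \<longleftrightarrow>
              (\<forall>r\<in>{1..n-z-1}. mu r \<noteq> mu (n-z) \<longrightarrow> h r = 0) \<and>
              (\<forall>t\<in>{n-z+2..n}. mu t \<noteq> mu (n-z) \<longrightarrow> h t = -1) \<and>
              (\<forall>m\<in>{1..n}. mu m = mu (n-z) \<longrightarrow> h m \<in> {0, -1})))))"
proof -
  let ?n = "CARD('n)"
  define z :: int where "z = - (\<Sum>j=1..?n. h j)"
  have zz: "zeta ?n mu = real_of_int z" using hsum by (simp add: z_def)
  have z0: "z \<ge> 0" using zeta_nonneg zz by simp
  define zn where "zn = nat z"
  have zn: "int zn = z" using z0 by (simp add: zn_def)
  have fl: "nat \<lfloor>zeta ?n mu\<rfloor> = zn" by (simp add: zz zn_def)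
  define L where "L = ?n - zn"
  have s0: "(\<Sum>j=1..?n. Arg (mu j)) + 2 * pi * (\<Sum>j=1..?n. real_of_int (h j)) = 0"
    by (rule X0_facts(4)[OF X0 eig eigX0])
  have sth: "(\<Sum>j=1..?n. Arg (mu j)) = 2 * pi * z"
    using s0 by (simp add: z_def)
  have "(\<Sum>j=1..?n. Arg (mu j)) \<le> of_nat (card {1..?n}) * pi"
    by (rule sum_bounded_above) (simp add: Arg_le_pi)
  then have "2 * pi * z \<le> ?n * pi" using sth by simp
  then have "2 * z \<le> ?n" by simp
  then have z2: "2 * zn \<le> ?n" using zn by linarith
  have mu1: "\<forall>j\<in>{1..?n}. mu j = exp (\<i> * complex_of_real (Arg (mu j)))"
    using X0_facts(1)[OF X0 eig eigX0] unit_exp_Arg by blast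
  have mueq: "mu j = mu k \<longleftrightarrow> Arg (mu j) = Arg (mu k)" if "j \<in> {1..?n}" "k \<in> {1..?n}" for j k
    using mu1 that by metis
  have dnn: "0 \<le> 4*pi*(pi - Arg (mu j))" for j by (simp add: Arg_le_pi)
  show ?thesis
  proof (intro conjI impI)
    assume "zeta ?n mu = 0"
    then have "z = 0" using zz by simp
    then have hs: "(\<Sum>j=1..?n. h j) = - int (?n - ?n)" using z_def by simp
    have l0: "0 \<le> (0::real)" "(0::real) < 8*pi^2" by simp_all
    have lo0: "\<forall>j\<in>{1..?n}. (0::real) \<le> 4*pi*(pi - Arg (mu j))" using dnn by simp
    have hi0: "\<forall>j\<in>{?n+1..?n}. 4*pi*(pi - Arg (mu j)) \<le> (0::real)" by simp
    note FC = final_core[OF X0 eig eigX0 order_refl l0 lo0 hi0 hs]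
    have FC1: "m_Q Q = (\<Sum>j=1..?n. (Arg (mu j))\<^sup>2)" using FC(1) dnn by simp
    have FC2: "X0 \<in> Theta Q \<longleftrightarrow> (\<forall>j\<in>{1..?n}. (h j = 0 \<and> 0 \<le> 4*pi*(pi - Arg (mu j)))
            \<or> (h j = -1 \<and> 4*pi*(pi - Arg (mu j)) \<le> 0))" using FC(2) dnn by simp
    show "m_Q Q = (\<Sum>j=1..?n. (Arg (mu j))\<^sup>2)" by (rule FC1)
    show "X0 \<in> Theta Q \<longleftrightarrow> (\<forall>j\<in>{1..?n}. h j = 0)"
    proof
      assume "X0 \<in> Theta Q"
      then have c: "\<forall>j\<in>{1..?n}. h j = 0 \<or> h j = -1" using FC2 by blast
      then have "\<forall>j\<in>{1..?n}. h j \<le> 0" by fastforce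
      then show "\<forall>j\<in>{1..?n}. h j = 0" using nonpos_sum_zero[of "{1..?n}" h] hs by simp
    next
      assume "\<forall>j\<in>{1..?n}. h j = 0"
      then show "X0 \<in> Theta Q" using FC2 dnn by simp
    qed
  next
    assume z1: "zeta ?n mu \<ge> 1"
    then have "z \<ge> 1" using zz by simp
    then have zn1: "zn \<ge> 1" using zn by linarith
    have L1: "1 \<le> L" "L < ?n" "L \<le> ?n" using z2 zn1 by (auto simp: L_def)
    have hs: "(\<Sum>j=1..?n. h j) = - int (?n - L)"
      using z2 zn by (simp add: L_def z_def)
    define lam where "lam = 4*pi*(pi - Arg (mu L))"
    have lam0: "0 \<le> lam" by (simp add: lam_def dnn)
    have lam8: "lam < 8*pi^2"
    proof -
      have "pi - Arg (mu L) < 2 * pi" using mpi_less_Arg[of "mu L"] by simp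
      then have "4*pi*(pi - Arg (mu L)) < 4*pi*(2*pi)" by (intro mult_strict_left_mono) auto
      then show ?thesis by (simp add: lam_def power2_eq_square)
    qed
    have sorted': "\<forall>i j. 1 \<le> i \<and> i \<le> j \<and> j \<le> ?n \<longrightarrow> Arg (mu i) \<le> Arg (mu j)" by (rule sorted)
    have lo: "\<forall>j\<in>{1..L}. lam \<le> 4*pi*(pi - Arg (mu j))"
      using sorted L1 by (auto simp: lam_def dcmp)
    have hi: "\<forall>j\<in>{L+1..?n}. 4*pi*(pi - Arg (mu j)) \<le> lam"
      using sorted L1 by (auto simp: lam_def dcmp)
    note FC = final_core[OF X0 eig eigX0 L1(3) lam0 lam8 lo hi hs]
    have Ldef: "?n - zn = L" by (simp add: L_def)
    have sq: "(2 * pi - Arg (mu j))\<^sup>2 = (Arg (mu j) - 2*pi)\<^sup>2" for j by (rule power2_commute)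
    show "let n = ?n; z = nat \<lfloor>zeta ?n mu\<rfloor> in
        m_Q Q = (\<Sum>j=1..n-z. (Arg (mu j))\<^sup>2) + (\<Sum>j=n-z+1..n. (2 * pi - Arg (mu j))\<^sup>2) \<and>
        (mu (n-z) \<noteq> mu (n-z+1) \<longrightarrow>
           (X0 \<in> Theta Q \<longleftrightarrow>
              (\<forall>j\<in>{1..n-z}. h j = 0) \<and> (\<forall>l\<in>{n-z+1..n}. h l = -1))) \<and>
        (mu (n-z) = mu (n-z+1) \<longrightarrow>
           (X0 \<in> Theta Q \<longleftrightarrow>
              (\<forall>r\<in>{1..n-z-1}. mu r \<noteq> mu (n-z) \<longrightarrow> h r = 0) \<and>
              (\<forall>t\<in>{n-z+2..n}. mu t \<noteq> mu (n-z) \<longrightarrow> h t = -1) \<and>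
              (\<forall>m\<in>{1..n}. mu m = mu (n-z) \<longrightarrow> h m \<in> {0, -1})))"
      unfolding Let_def fl Ldef
    proof (intro conjI impI)
      show "m_Q Q = (\<Sum>j=1..L. (Arg (mu j))\<^sup>2) + (\<Sum>j=L+1..?n. (2 * pi - Arg (mu j))\<^sup>2)"
        using FC(1) by (simp only: sq)
    next
      assume ne: "mu L \<noteq> mu (L+1)"
      have "Arg (mu L) \<noteq> Arg (mu (L+1))" using ne mueq[of L "L+1"] L1 by auto
      moreover have "Arg (mu L) \<le> Arg (mu (L+1))" using sorted L1 by auto
      ultimately have lt: "Arg (mu L) < Arg (mu (L+1))" by simp
      show "X0 \<in> Theta Q \<longleftrightarrow> (\<forall>j\<in>{1..L}. h j = 0) \<and> (\<forall>l\<in>{L+1..?n}. h l = -1)"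
        using FC(2) cond_unequal[OF L1(1,2) sorted' lt hs] by (simp add: lam_def)
    next
      assume eq: "mu L = mu (L+1)"
      have me: "\<forall>j\<in>{1..?n}. mu j = mu L \<longleftrightarrow> Arg (mu j) = Arg (mu L)"
        using mueq L1 by auto
      show "X0 \<in> Theta Q \<longleftrightarrow> (\<forall>r\<in>{1..L-1}. mu r \<noteq> mu L \<longrightarrow> h r = 0) \<and>
              (\<forall>t\<in>{L+2..?n}. mu t \<noteq> mu L \<longrightarrow> h t = -1) \<and>
              (\<forall>m\<in>{1..?n}. mu m = mu L \<longrightarrow> h m \<in> {0, -1})"
        using FC(2) cond_equal[OF L1(1,2) sorted' me eq, of h] by (simp add: lam_def)
    qed
  qed
qed



end
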